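(* Let $\Omega\subset\mathbb{R}^N$ be a bounded open Lipschitz set and $\alpha\in(0,1)$. For $u\in C^\alpha(\overline\Omega)$ we have $$(-\Delta)^s_\Omega u=s\,L^\Omega_\Delta u+o(s)\qquad\text{in }L^\infty(\Omega)\text{ as }s\to0^+,$$ where $$[L^\Omega_\Delta u](x)=c_N\int_\Omega\frac{u(x)-u(y)}{|x-y|^N}\,dy,\quad x\in\Omega,\qquad c_N=\pi^{-N/2}\Gamma(\tfrac N2).$$ Moreover, this expansion is uniform for $u$ in bounded subsets of $C^\alpha(\overline\Omega)$.
   Context: A bounded open set $\Omega\subset\mathbb{R}^N$ is called a Lipschitz set if every point of $\partial\Omega$ has an open neighborhood in which $\partial\Omega$ is, after a suitable rotation, the graph of a Lipschitz function. For $s\in(0,1)$ and $u$ defined on $\Omega$, the regional fractional Laplacian is $(-\Delta)^s_\Omega u(x)=c_{N,s}\lim_{\varepsilon\to0^+}\int_{\Omega\setminus B_\varepsilon(x)}\frac{u(x)-u(y)}{|x-y|^{N+2s}}dy$ for $x\in\Omega$, with $c_{N,s}=\frac{s4^s\Gamma(\frac{N+2s}{2})}{\pi^{N/2}\Gamma(1-s)}$. $C^\alpha(\overline\Omega)$ is the space of $\alpha$-Hölder continuous functions on $\overline\Omega$ with its usual norm $\|u\|_{L^\infty}+\sup_{x\ne y}\frac{|u(x)-u(y)|}{|x-y|^\alpha}$. *)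

theory Defs
  imports "HOL-Analysis.Analysis"
begin

text \<open>Bounded open Lipschitz set: every boundary point has an open neighbourhood U in which
  the boundary is, after a rotation, the graph of a Lipschitz function. The rotation is encoded
  by the unit vector e (the image of the last coordinate direction); the graph is taken over the
  hyperplane orthogonal to e.\<close>
definition lipschitz_set :: "'a::euclidean_space set \<Rightarrow> bool" where
  "lipschitz_set \<Omega> \<longleftrightarrow> bounded \<Omega> \<and> open \<Omega> \<and>
     (\<forall>p\<in>frontier \<Omega>. \<exists>U e g L. open U \<and> p \<in> U \<and> norm e = 1 \<and>
        L-lipschitz_on {y. y \<bullet> e = 0} g \<and>
        frontier \<Omega> \<inter> U = {y + g y *\<^sub>R e | y. y \<bullet> e = 0} \<inter> U)"

definition holder_space :: "real \<Rightarrow> 'a::euclidean_space set \<Rightarrow> ('a \<Rightarrow> real) set" where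
  "holder_space \<alpha> \<Omega> = {u. bounded (u ` closure \<Omega>) \<and>
     (\<exists>C. \<forall>x\<in>closure \<Omega>. \<forall>y\<in>closure \<Omega>. \<bar>u x - u y\<bar> \<le> C * dist x y powr \<alpha>)}"

definition holder_norm :: "real \<Rightarrow> 'a::euclidean_space set \<Rightarrow> ('a \<Rightarrow> real) \<Rightarrow> real" where
  "holder_norm \<alpha> \<Omega> u = (SUP x\<in>closure \<Omega>. \<bar>u x\<bar>) +
     (SUP xy\<in>{(x,y). x \<in> closure \<Omega> \<and> y \<in> closure \<Omega> \<and> x \<noteq> y}.
        \<bar>u (fst xy) - u (snd xy)\<bar> / dist (fst xy) (snd xy) powr \<alpha>)"

definition c_Ns :: "nat \<Rightarrow> real \<Rightarrow> real" where
  "c_Ns N s = s * 4 powr s * Gamma ((real N + 2 * s) / 2) / (pi powr (real N / 2) * Gamma (1 - s))"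

definition c_N :: "nat \<Rightarrow> real" where
  "c_N N = Gamma (real N / 2) / pi powr (real N / 2)"

definition regional_frac_lap :: "real \<Rightarrow> 'a::euclidean_space set \<Rightarrow> ('a \<Rightarrow> real) \<Rightarrow> 'a \<Rightarrow> real" where
  "regional_frac_lap s \<Omega> u x = c_Ns DIM('a) s *
     Lim (at_right 0) (\<lambda>\<epsilon>. LINT y:(\<Omega> - ball x \<epsilon>)|lborel.
        (u x - u y) / norm (x - y) powr (real DIM('a) + 2 * s))"

definition L_Delta :: "'a::euclidean_space set \<Rightarrow> ('a \<Rightarrow> real) \<Rightarrow> 'a \<Rightarrow> real" where
  "L_Delta \<Omega> u x = c_N DIM('a) *
     (LINT y:\<Omega>|lborel. (u x - u y) / norm (x - y) powr real DIM('a))"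

end

theory Submission
  imports Defs "HOL-Analysis.Analysis"
begin



lemma pointwise_bound_aux:
  fixes r R :: real
  assumes "0 < r" "r < R"
  shows "\<exists>k::nat. R / 2^(k+1) \<le> r \<and> r < R / 2^k"
proof -
  obtain n::nat where n: "R / r < 2^n" using real_arch_pow[of 2 "R/r"] by auto
  hence ex: "\<exists>n::nat. R / 2^n \<le> r" using assms by (auto simp: field_simps intro!: exI[of _ n])
  define m where "m = (LEAST n::nat. R / 2^n \<le> r)"
  have m1: "R / 2^m \<le> r" unfolding m_def by (rule LeastI_ex[OF ex])
  have m0: "m \<noteq> 0" using m1 assms by (intro notI) simp
  then obtain k where k: "m = Suc k" by (cases m) auto
  have "\<not> R / 2^k \<le> r" using not_less_Least[of k "\<lambda>n. R / 2^n \<le> r"] k unfolding m_def by auto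
  thus ?thesis using m1 k by (intro exI[of _ k]) auto
qed

lemma geom_term:
  fixes R \<beta> :: real and N :: nat
  assumes "0 < R"
  shows "(R / 2^(k+1)) powr (-\<beta>) * (R / 2^k)^N =
     2 powr \<beta> * R powr (N - \<beta>) * (2 powr (\<beta> - N))^k"
proof -
  have e1: "(2::real)^(k+1) = 2 powr (real (k+1))" by (rule powr_realpow[symmetric]) simp
  have e2: "(2::real)^k = 2 powr (real k)" by (rule powr_realpow[symmetric]) simp
  have "(R / 2 powr (real (k+1))) powr (-\<beta>) = R powr (-\<beta>) / (2 powr (real (k+1))) powr (-\<beta>)"
    using assms by (intro powr_divide; auto)
  also have "(2 powr (real (k+1))) powr (-\<beta>) = 2 powr (- (\<beta> * (k+1)))"
    by (simp only: powr_powr) (simp add: mult.commute)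
  also have "R powr (-\<beta>) / 2 powr (- (\<beta> * (k+1))) = R powr (-\<beta>) * 2 powr (\<beta> * (k+1))"
    by (simp only: powr_minus_divide) simp
  finally have a: "(R / 2^(k+1)) powr (-\<beta>) = R powr (-\<beta>) * 2 powr (\<beta> * (k+1))" unfolding e1 .
  have "(R / 2^k)^N = (R / 2^k) powr (real N)" using assms by (intro powr_realpow[symmetric]) simp
  also have "\<dots> = R powr N / (2 powr (real k)) powr N" unfolding e2 using assms by (intro powr_divide; auto)
  also have "(2 powr (real k)) powr N = 2 powr (real k * real N)" by (simp only: powr_powr)
  also have "R powr N / 2 powr (real k * real N) = R powr N * 2 powr (- (real k * real N))"
    by (simp only: powr_minus_divide) simp
  finally have b: "(R / 2^k)^N = R powr N * 2 powr (- (real k * real N))" .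
  have c: "(2 powr (\<beta> - N))^k = 2 powr ((\<beta> - N) * k)"
    by (subst powr_realpow[symmetric]) (simp_all only: powr_powr, simp)
  have d: "R powr (-\<beta>) * R powr N = R powr (N - \<beta>)"
    by (simp only: powr_add[symmetric]) simp
  have f: "2 powr (\<beta> * (k+1)) * 2 powr (- (real k * real N)) = 2 powr \<beta> * 2 powr ((\<beta> - N) * k)"
    by (simp only: powr_add[symmetric]) (simp add: algebra_simps)
  have "(R / 2^(k+1)) powr (-\<beta>) * (R / 2^k)^N =
     (R powr (-\<beta>) * R powr N) * (2 powr (\<beta> * (k+1)) * 2 powr (- (real k * real N)))"
    unfolding a b by (simp only: mult_ac)
  also have "\<dots> = 2 powr \<beta> * R powr (N - \<beta>) * (2 powr (\<beta> - N))^k"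
    unfolding d f c by (simp only: mult_ac)
  finally show ?thesis .
qed

lemma term_le_suminf: fixes f :: "nat \<Rightarrow> ennreal" shows "f k \<le> suminf f"
  using sum_le_suminf[OF summableI, of "{k}" f] by simp

definition Kc :: "nat \<Rightarrow> real \<Rightarrow> real" where
  "Kc N \<beta> = unit_ball_vol N * 2 powr \<beta> / (1 - 2 powr (\<beta> - N))"

lemma core_nn:
  fixes x :: "'a::euclidean_space" and \<beta> R :: real
  assumes b0: "0 \<le> (\<beta>::real)" and bN: "\<beta> < DIM('a)" and R0: "0 < R"
  shows "(\<integral>\<^sup>+ y. ennreal (indicator (ball x R) y * norm (x - y) powr (-\<beta>)) \<partial>lborel)
      \<le> ennreal (Kc DIM('a) \<beta> * R powr (DIM('a) - \<beta>))"
proof -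
  define N where "N = DIM('a)"
  define c where "c k = (R / 2^(k+1)) powr (-\<beta>)" for k :: nat
  define q where "q = (2::real) powr (\<beta> - N)"
  have bN': "\<beta> - N < 0" using [[show_types, show_sorts]] using bN N_def by simp
  have q0: "0 \<le> q" "q < 1" unfolding q_def
    by (simp, rule powr_less_one, simp, rule bN')
  have pw: "ennreal (indicator (ball x R) y * norm (x - y) powr (-\<beta>))
      \<le> (\<Sum>k. ennreal (c k) * indicator (ball x (R / 2^k)) y)" for y
  proof (cases "y \<in> ball x R \<and> y \<noteq> x")
    case True
    hence "0 < norm (x - y)" "norm (x - y) < R" by (auto simp: dist_norm)
    then obtain k where k: "R / 2^(k+1) \<le> norm (x - y)" "norm (x - y) < R / 2^k"
      using pointwise_bound_aux by blast
    have "norm (x - y) powr (-\<beta>) \<le> c k"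
      unfolding c_def using k b0 R0 by (intro powr_mono2') auto
    hence "ennreal (indicator (ball x R) y * norm (x - y) powr (-\<beta>)) \<le> ennreal (c k) * indicator (ball x (R / 2^k)) y"
      using True k by (auto simp: dist_norm intro: ennreal_leI)
    also have "\<dots> \<le> (\<Sum>k. ennreal (c k) * indicator (ball x (R / 2^k)) y)"
      by (rule term_le_suminf)
    finally show ?thesis .
  next
    case False
    thus ?thesis by (auto simp: indicator_def)
  qed
  have "(\<integral>\<^sup>+ y. ennreal (indicator (ball x R) y * norm (x - y) powr (-\<beta>)) \<partial>lborel)
     \<le> (\<integral>\<^sup>+ y. (\<Sum>k. ennreal (c k) * indicator (ball x (R / 2^k)) y) \<partial>lborel)"
    by (intro nn_integral_mono pw)
  also have "\<dots> = (\<Sum>k. \<integral>\<^sup>+ y. ennreal (c k) * indicator (ball x (R / 2^k)) y \<partial>lborel)"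
    by (intro nn_integral_suminf) (measurable, auto simp: pred_def)
  also have "\<dots> = (\<Sum>k. ennreal (c k * (unit_ball_vol N * (R / 2^k)^N)))"
  proof (intro suminf_cong)
    fix k
    have "0 \<le> c k" unfolding c_def by simp
    then show "(\<integral>\<^sup>+ y. ennreal (c k) * indicator (ball x (R / 2^k)) y \<partial>lborel) = ennreal (c k * (unit_ball_vol N * (R / 2^k)^N))"
      using R0 by (subst nn_integral_cmult_indicator) (auto simp: emeasure_ball N_def ennreal_mult)
  qed
  also have "\<dots> = (\<Sum>k. ennreal (unit_ball_vol N * 2 powr \<beta> * R powr (N - \<beta>) * q^k))"
    using R0 geom_term[of R _ \<beta> N] by (simp add: c_def q_def mult_ac)
  also have "\<dots> = ennreal (\<Sum>k. unit_ball_vol N * 2 powr \<beta> * R powr (N - \<beta>) * q^k)"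
    using q0 by (intro suminf_ennreal2) (auto intro!: summable_mult summable_geometric)
  also have "(\<Sum>k. unit_ball_vol N * 2 powr \<beta> * R powr (N - \<beta>) * q^k) = Kc DIM('a) \<beta> * R powr (DIM('a) - \<beta>)"
    using q0 by (simp add: suminf_mult suminf_geometric Kc_def N_def q_def field_simps)
  finally show ?thesis .
qed

lemma Kc_pos: assumes "\<beta> < real N" shows "0 < Kc N \<beta>"
proof -
  have "2 powr (\<beta> - N) < 1" by (rule powr_less_one) (use assms in auto)
  thus ?thesis unfolding Kc_def by (intro divide_pos_pos mult_pos_pos unit_ball_vol_pos) auto
qed

lemma core_meas: "(\<lambda>y. indicator A y * norm ((x::'a::euclidean_space) - y) powr (-\<beta>)) \<in> borel_measurable borel"
  if "A \<in> sets borel" using that by measurable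

lemma core:
  fixes x :: "'a::euclidean_space" and \<beta> R :: real
  assumes b0: "0 \<le> \<beta>" and bN: "\<beta> < DIM('a)" and R0: "0 < R"
  shows "set_integrable lborel (ball x R) (\<lambda>y. norm (x - y) powr (-\<beta>))"
    and "(LINT y:ball x R|lborel. norm (x - y) powr (-\<beta>)) \<le> Kc DIM('a) \<beta> * R powr (DIM('a) - \<beta>)"
proof -
  have m: "(\<lambda>y. indicator (ball x R) y * norm (x - y) powr (-\<beta>)) \<in> borel_measurable lborel"
    using core_meas[of "ball x R" x \<beta>] by simp
  have nn: "(\<integral>\<^sup>+ y. ennreal (indicator (ball x R) y * norm (x - y) powr (-\<beta>)) \<partial>lborel)
      \<le> ennreal (Kc DIM('a) \<beta> * R powr (DIM('a) - \<beta>))" by (rule core_nn[OF assms])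
  show "set_integrable lborel (ball x R) (\<lambda>y. norm (x - y) powr (-\<beta>))"
    unfolding set_integrable_def
    using nn by (intro integrableI_nonneg) (use m in \<open>auto simp: top.not_eq_extremum intro: le_less_trans\<close>)
  have "(LINT y:ball x R|lborel. norm (x - y) powr (-\<beta>)) =
      enn2real (\<integral>\<^sup>+ y. ennreal (indicator (ball x R) y * norm (x - y) powr (-\<beta>)) \<partial>lborel)"
    unfolding set_lebesgue_integral_def using m by (simp add: integral_eq_nn_integral)
  also have "\<dots> \<le> Kc DIM('a) \<beta> * R powr (DIM('a) - \<beta>)"
    using nn Kc_pos[OF bN] by (intro enn2real_leI) auto
  finally show "(LINT y:ball x R|lborel. norm (x - y) powr (-\<beta>)) \<le> Kc DIM('a) \<beta> * R powr (DIM('a) - \<beta>)" .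
qed




lemma pw_diff:
  fixes d r \<rho> D s \<alpha> M :: real and N :: nat
  assumes r0: "0 < r" and rD: "r < D" and \<rho>0: "0 < \<rho>" and \<rho>1: "\<rho> \<le> 1" and D1: "1 \<le> D"
    and s0: "0 \<le> s" and s\<alpha>: "4 * s \<le> \<alpha>" and M0: "0 \<le> M" and hd: "\<bar>d\<bar> \<le> M * r powr \<alpha>"
  shows "\<bar>d / r powr (N + 2 * s) - d / r powr N\<bar> \<le>
    (if r < \<rho> then 2 * M * r powr (\<alpha>/2 - N) else 0) +
    M * max (\<rho> powr (-2 * s) - 1) (1 - D powr (-2 * s)) * r powr (\<alpha> - N)"
proof -
  define e where "e = r powr (-2 * s)"
  define \<eta> where "\<eta> = max (\<rho> powr (-2 * s) - 1) (1 - D powr (-2 * s))"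
  have \<rho>e: "1 \<le> \<rho> powr (-2 * s)"
    using \<rho>0 \<rho>1 s0 by (simp add: powr_minus_divide) (rule powr_le1, auto)
  have \<eta>0: "0 \<le> \<eta>" unfolding \<eta>_def using \<rho>e by simp
  have e0: "0 < e" unfolding e_def using r0 by simp
  have diff: "d / r powr (N + 2 * s) - d / r powr N = d * r powr (- real N) * (e - 1)"
    using r0 unfolding e_def by (simp add: powr_minus_divide powr_add field_simps)
  have "\<bar>d * r powr (- real N) * (e - 1)\<bar> = \<bar>d\<bar> * r powr (- real N) * \<bar>e - 1\<bar>"
    by (simp add: abs_mult)
  also have "\<dots> \<le> M * r powr \<alpha> * r powr (- real N) * \<bar>e - 1\<bar>"
    by (intro mult_right_mono hd) auto
  also have "\<dots> = M * r powr (\<alpha> - N) * \<bar>e - 1\<bar>"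
    using r0 by (simp add: powr_add[symmetric])
  finally have main: "\<bar>d / r powr (N + 2 * s) - d / r powr N\<bar> \<le> M * r powr (\<alpha> - N) * \<bar>e - 1\<bar>"
    unfolding diff .
  show ?thesis
  proof (cases "r < \<rho>")
    case True
    hence r1: "r \<le> 1" using \<rho>1 by simp
    have "\<bar>e - 1\<bar> \<le> e + 1" using e0 by simp
    hence "M * r powr (\<alpha> - N) * \<bar>e - 1\<bar> \<le> M * r powr (\<alpha> - N) * (e + 1)"
      using M0 by (intro mult_left_mono) auto
    also have "\<dots> = M * r powr (\<alpha> - N - 2 * s) + M * r powr (\<alpha> - N)"
      using r0 unfolding e_def by (simp add: powr_add[symmetric] algebra_simps)
    also have "\<dots> \<le> M * r powr (\<alpha>/2 - N) + M * r powr (\<alpha>/2 - N)"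
      using r0 r1 s\<alpha> s0 M0 by (intro add_mono mult_left_mono powr_mono') auto
    finally have "\<bar>d / r powr (N + 2 * s) - d / r powr N\<bar> \<le> 2 * M * r powr (\<alpha>/2 - N)"
      using main by simp
    moreover have "0 \<le> M * \<eta> * r powr (\<alpha> - N)" using M0 \<eta>0 by simp
    ultimately show ?thesis using True unfolding \<eta>_def by simp
  next
    case False
    have "\<bar>e - 1\<bar> \<le> \<eta>"
    proof (cases "r \<le> 1")
      case True
      have "1 \<le> e" unfolding e_def using r0 True s0
        by (simp add: powr_minus_divide) (rule powr_le1, auto)
      moreover have "e \<le> \<rho> powr (-2 * s)" unfolding e_def using False \<rho>0 s0 by (intro powr_mono2') auto
      ultimately show ?thesis unfolding \<eta>_def by simp
    next
      case f2: False
      have "e \<le> 1" unfolding e_def using powr_mono2'[of "-2 * s" 1 r] f2 s0 by simp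
      moreover have "D powr (-2 * s) \<le> e" unfolding e_def using rD r0 s0 by (intro powr_mono2') auto
      ultimately show ?thesis unfolding \<eta>_def by simp
    qed
    hence "M * r powr (\<alpha> - N) * \<bar>e - 1\<bar> \<le> M * r powr (\<alpha> - N) * \<eta>"
      using M0 by (intro mult_left_mono) auto
    thus ?thesis using main False unfolding \<eta>_def by (simp add: mult_ac)
  qed
qed




lemma holder_bound:
  fixes u :: "'a::euclidean_space \<Rightarrow> real"
  assumes u: "u \<in> holder_space \<alpha> \<Omega>" and hn: "holder_norm \<alpha> \<Omega> u \<le> M"
    and y: "y \<in> closure \<Omega>" and z: "z \<in> closure \<Omega>" and a0: "0 < \<alpha>"
  shows "\<bar>u y - u z\<bar> \<le> M * dist y z powr \<alpha>"
proof (cases "y = z")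
  case True
  thus ?thesis using a0 by simp
next
  case False
  obtain C where C: "\<forall>a\<in>closure \<Omega>. \<forall>b\<in>closure \<Omega>. \<bar>u a - u b\<bar> \<le> C * dist a b powr \<alpha>"
    using u unfolding holder_space_def by auto
  have "bounded (u ` closure \<Omega>)" using u unfolding holder_space_def by auto
  then obtain B where B: "\<forall>a\<in>closure \<Omega>. \<bar>u a\<bar> \<le> B" unfolding bounded_iff by auto
  define S1 where "S1 = (SUP a\<in>closure \<Omega>. \<bar>u a\<bar>)"
  define P where "P = {(x,y). x \<in> closure \<Omega> \<and> y \<in> closure \<Omega> \<and> x \<noteq> y}"
  define g where "g = (\<lambda>xy. \<bar>u (fst xy) - u (snd xy)\<bar> / dist (fst xy) (snd xy) powr \<alpha>)"
  have "\<bar>u y\<bar> \<le> S1" unfolding S1_def using B y by (intro cSUP_upper bdd_aboveI2) auto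
  hence S1: "0 \<le> S1" by linarith
  have gC: "g p \<le> C" if pP: "p \<in> P" for p
  proof -
    obtain a b where p: "p = (a,b)" "a \<in> closure \<Omega>" "b \<in> closure \<Omega>" "a \<noteq> b"
      using pP unfolding P_def by (cases p) auto
    have "0 < dist a b powr \<alpha>" using p by simp
    thus ?thesis unfolding g_def p(1) using C p by (simp add: divide_le_eq)
  qed
  have "g (y,z) \<le> (SUP p\<in>P. g p)"
    using y z False gC by (intro cSUP_upper bdd_aboveI2) (auto simp: P_def)
  also have "\<dots> = holder_norm \<alpha> \<Omega> u - S1"
    unfolding holder_norm_def S1_def P_def g_def by simp
  finally have "g (y,z) \<le> M" using hn S1 by linarith
  moreover have "0 < dist y z powr \<alpha>" using False by simp
  ultimately show ?thesis unfolding g_def by (simp add: divide_le_eq mult.commute)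
qed

lemma holder_cont:
  fixes u :: "'a::metric_space \<Rightarrow> real"
  assumes h: "\<forall>y\<in>S. \<forall>z\<in>S. \<bar>u y - u z\<bar> \<le> M * dist y z powr \<alpha>" and a0: "0 < \<alpha>"
  shows "continuous_on S u"
  unfolding continuous_on_iff
proof (intro ballI allI impI)
  fix x e assume x: "x \<in> S" and e: "0 < (e::real)"
  define t where "t = e / (\<bar>M\<bar> + 1)"
  have t0: "0 < t" unfolding t_def using e by simp
  define d where "d = t powr (1/\<alpha>)"
  have "0 < d" unfolding d_def using t0 by simp
  moreover have "dist (u x') (u x) < e" if "x' \<in> S" "dist x' x < d" for x'
  proof -
    have "dist x' x powr \<alpha> < d powr \<alpha>" using that a0 by (intro powr_less_mono2) auto
    also have "d powr \<alpha> = t" unfolding d_def using a0 t0 by (simp add: powr_powr)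
    finally have lt: "dist x' x powr \<alpha> < t" .
    have "dist (u x') (u x) \<le> M * dist x' x powr \<alpha>" using h that x by (simp add: dist_real_def)
    also have "\<dots> \<le> \<bar>M\<bar> * dist x' x powr \<alpha>" by (intro mult_right_mono) auto
    also have "\<dots> \<le> \<bar>M\<bar> * t" using lt by (intro mult_left_mono) auto
    also have "\<dots> < e" unfolding t_def using e
      by (simp add: field_simps)
    finally show ?thesis .
  qed
  ultimately show "\<exists>d>0. \<forall>x'\<in>S. dist x' x < d \<longrightarrow> dist (u x') (u x) < e" by blast
qed




definition fs :: "('a::euclidean_space \<Rightarrow> real) \<Rightarrow> 'a \<Rightarrow> real \<Rightarrow> 'a \<Rightarrow> real" where
  "fs u x s y = (u x - u y) / norm (x - y) powr (real DIM('a) + 2 * s)"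

lemma dim_ge1: "1 \<le> real DIM('a::euclidean_space)"
  using DIM_positive[where 'a='a] by linarith

lemma int_bound:
  fixes f g :: "'a::euclidean_space \<Rightarrow> real"
  assumes g: "integrable lborel g" and f: "f \<in> borel_measurable lborel" and b: "\<And>y. \<bar>f y\<bar> \<le> g y"
  shows "integrable lborel f" "\<bar>integral\<^sup>L lborel f\<bar> \<le> integral\<^sup>L lborel g"
proof -
  have "AE y in lborel. norm (f y) \<le> norm (g y)" using b by (intro AE_I2) (metis abs_ge_self order_trans real_norm_def)
  thus i: "integrable lborel f" using Bochner_Integration.integrable_bound[OF g f] by blast
  show "\<bar>integral\<^sup>L lborel f\<bar> \<le> integral\<^sup>L lborel g"
    using Bochner_Integration.integral_norm_bound_integral[OF i g] b by auto
qed

lemma fs_meas: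
  fixes u :: "'a::euclidean_space \<Rightarrow> real"
  assumes op: "open \<Omega>" and cu: "continuous_on \<Omega> u"
  shows "(\<lambda>y. indicator \<Omega> y * fs u x s y) \<in> borel_measurable lborel"
proof -
  have "continuous_on (\<Omega> - {x}) (fs u x s)"
    unfolding fs_def
    by (intro continuous_intros continuous_on_subset[OF cu]) auto
  moreover have "\<Omega> - {x} \<in> sets borel" using op by auto
  ultimately have "(\<lambda>y. indicator (\<Omega> - {x}) y *\<^sub>R fs u x s y) \<in> borel_measurable borel"
    by (rule borel_measurable_continuous_on_indicator[rotated])
  moreover have "(\<lambda>y. indicator (\<Omega> - {x}) y *\<^sub>R fs u x s y) = (\<lambda>y. indicator \<Omega> y * fs u x s y)"
    by (auto simp: indicator_def fs_def)
  ultimately show ?thesis by simp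
qed

lemma fs_pw:
  fixes u :: "'a::euclidean_space \<Rightarrow> real" and s \<alpha> M :: real
  assumes h: "\<bar>u x - u y\<bar> \<le> M * dist x y powr \<alpha>" and M0: "0 \<le> M"
  shows "\<bar>fs u x s y\<bar> \<le> M * norm (x - y) powr (- (DIM('a) + 2 * s - \<alpha>))"
proof (cases "y = x")
  case True thus ?thesis by (simp add: fs_def)
next
  case False
  hence r0: "0 < norm (x - y)" by simp
  have "\<bar>fs u x s y\<bar> = \<bar>u x - u y\<bar> / norm (x - y) powr (DIM('a) + 2 * s)"
    unfolding fs_def by (simp add: abs_divide)
  also have "\<dots> \<le> M * norm (x - y) powr \<alpha> / norm (x - y) powr (DIM('a) + 2 * s)"
    using h r0 by (intro divide_right_mono) (auto simp: dist_norm)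
  also have "\<dots> = M * norm (x - y) powr (- (DIM('a) + 2 * s - \<alpha>))"
    using r0 by (simp add: powr_diff)
  finally show ?thesis .
qed

lemma fs_local:
  fixes u :: "'a::euclidean_space \<Rightarrow> real" and s \<alpha> M R :: real
  assumes op: "open \<Omega>" and cu: "continuous_on \<Omega> u"
    and h: "\<forall>y\<in>\<Omega>. \<bar>u x - u y\<bar> \<le> M * dist x y powr \<alpha>" and M0: "0 \<le> M"
    and s0: "0 \<le> s" and s\<alpha>: "2 * s < \<alpha>" and a1: "\<alpha> \<le> 1"
    and A: "A \<in> sets borel" "A \<subseteq> \<Omega>" "A \<subseteq> ball x R" and R0: "0 < R"
  shows "integrable lborel (\<lambda>y. indicator A y * fs u x s y)"
    "\<bar>integral\<^sup>L lborel (\<lambda>y. indicator A y * fs u x s y)\<bar> \<le> M * (Kc DIM('a) (DIM('a) + 2 * s - \<alpha>) * R powr (\<alpha> - 2 * s))"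
proof -
  define \<beta> where "\<beta> = real DIM('a) + 2 * s - \<alpha>"
  have b0: "0 \<le> \<beta>" unfolding \<beta>_def using s0 a1 dim_ge1[where 'a='a] by linarith
  have bN: "\<beta> < DIM('a)" unfolding \<beta>_def using s\<alpha> by simp
  note c = core[OF b0 bN R0, of x]
  define g where "g y = M * (indicator (ball x R) y * norm (x - y) powr (-\<beta>))" for y
  have gi: "integrable lborel g" unfolding g_def using c(1) unfolding set_integrable_def by simp
  have "(\<lambda>y. indicator A y * fs u x s y) = (\<lambda>y. indicator A y * (indicator \<Omega> y * fs u x s y))"
    using A(2) by (auto simp: indicator_def fun_eq_iff)
  moreover have "(\<lambda>y. indicator A y * (indicator \<Omega> y * fs u x s y)) \<in> borel_measurable lborel"
    using fs_meas[OF op cu, of x s] A(1) by measurable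
  ultimately have fm: "(\<lambda>y. indicator A y * fs u x s y) \<in> borel_measurable lborel" by simp
  have b: "\<bar>indicator A y * fs u x s y\<bar> \<le> g y" for y
  proof (cases "y \<in> A")
    case True
    hence "y \<in> \<Omega>" "y \<in> ball x R" using A by auto
    thus ?thesis using True fs_pw[of u x y M \<alpha> s] h M0 unfolding g_def \<beta>_def by auto
  next
    case False thus ?thesis using M0 unfolding g_def by (simp add: indicator_def)
  qed
  note ib = int_bound[OF gi fm b]
  show "integrable lborel (\<lambda>y. indicator A y * fs u x s y)" by (rule ib(1))
  have "integral\<^sup>L lborel g = M * (LINT y:ball x R|lborel. norm (x - y) powr (-\<beta>))"
    unfolding g_def set_lebesgue_integral_def by simp
  also have "\<dots> \<le> M * (Kc DIM('a) \<beta> * R powr (DIM('a) - \<beta>))"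
    using c(2) M0 by (intro mult_left_mono) auto
  finally show "\<bar>integral\<^sup>L lborel (\<lambda>y. indicator A y * fs u x s y)\<bar> \<le> M * (Kc DIM('a) (DIM('a) + 2 * s - \<alpha>) * R powr (\<alpha> - 2 * s))"
    using ib(2) unfolding \<beta>_def by simp
qed




lemma fs_lim:
  fixes u :: "'a::euclidean_space \<Rightarrow> real" and s \<alpha> M D :: real
  assumes op: "open \<Omega>" and cu: "continuous_on \<Omega> u"
    and h: "\<forall>y\<in>\<Omega>. \<bar>u x - u y\<bar> \<le> M * dist x y powr \<alpha>" and M0: "0 \<le> M"
    and s0: "0 \<le> s" and s\<alpha>: "2 * s < \<alpha>" and a1: "\<alpha> \<le> 1"
    and \<Omega>D: "\<Omega> \<subseteq> ball x D" and D0: "0 < D"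
  shows "Lim (at_right 0) (\<lambda>\<epsilon>. LINT y:(\<Omega> - ball x \<epsilon>)|lborel. fs u x s y) = (LINT y:\<Omega>|lborel. fs u x s y)"
proof -
  define K where "K = Kc DIM('a) (DIM('a) + 2 * s - \<alpha>)"
  define I where "I = integral\<^sup>L lborel (\<lambda>y. indicator \<Omega> y * fs u x s y)"
  note loc = fs_local[OF op cu h M0 s0 s\<alpha> a1]
  have "\<Omega> \<in> sets borel" using op by auto
  have eq: "(LINT y:(\<Omega> - ball x \<epsilon>)|lborel. fs u x s y) - I =
      - integral\<^sup>L lborel (\<lambda>y. indicator (\<Omega> \<inter> ball x \<epsilon>) y * fs u x s y)" if e0: "0 < \<epsilon>" for \<epsilon>
  proof -
    have i1: "integrable lborel (\<lambda>y. indicator (\<Omega> - ball x \<epsilon>) y * fs u x s y)"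
      using \<open>\<Omega> \<in> sets borel\<close> \<Omega>D D0 by (intro loc(1)[of _ D]) auto
    have i2: "integrable lborel (\<lambda>y. indicator (\<Omega> \<inter> ball x \<epsilon>) y * fs u x s y)"
      using \<open>\<Omega> \<in> sets borel\<close> e0 by (intro loc(1)[of _ \<epsilon>]) auto
    have "(\<lambda>y. indicator \<Omega> y * fs u x s y) = (\<lambda>y. indicator (\<Omega> - ball x \<epsilon>) y * fs u x s y +
        indicator (\<Omega> \<inter> ball x \<epsilon>) y * fs u x s y)"
      by (auto simp: indicator_def fun_eq_iff)
    hence "I = integral\<^sup>L lborel (\<lambda>y. indicator (\<Omega> - ball x \<epsilon>) y * fs u x s y) +
        integral\<^sup>L lborel (\<lambda>y. indicator (\<Omega> \<inter> ball x \<epsilon>) y * fs u x s y)"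
      unfolding I_def using i1 i2 by simp
    thus ?thesis unfolding set_lebesgue_integral_def by simp
  qed
  have "((\<lambda>\<epsilon>. M * (K * \<epsilon> powr (\<alpha> - 2 * s))) \<longlongrightarrow> M * (K * 0)) (at_right 0)"
    using s\<alpha> by (intro tendsto_intros tendsto_zero_powrI)
      (auto intro: tendsto_ident_at eventually_mono[OF eventually_at_right_less])
  hence g0: "((\<lambda>\<epsilon>. M * (K * \<epsilon> powr (\<alpha> - 2 * s))) \<longlongrightarrow> 0) (at_right 0)" by simp
  have "\<forall>\<^sub>F \<epsilon> in at_right 0. norm ((LINT y:(\<Omega> - ball x \<epsilon>)|lborel. fs u x s y) - I) \<le> M * (K * \<epsilon> powr (\<alpha> - 2 * s))"
  proof (rule eventually_mono[OF eventually_at_right_less])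
    fix \<epsilon> :: real assume e0: "0 < \<epsilon>"
    show "norm ((LINT y:(\<Omega> - ball x \<epsilon>)|lborel. fs u x s y) - I) \<le> M * (K * \<epsilon> powr (\<alpha> - 2 * s))"
      unfolding eq[OF e0] K_def using \<open>\<Omega> \<in> sets borel\<close> e0 by (simp, intro loc(2)) auto
  qed
  from Lim_null_comparison[OF this g0]
  have "((\<lambda>\<epsilon>. LINT y:(\<Omega> - ball x \<epsilon>)|lborel. fs u x s y) \<longlongrightarrow> I) (at_right 0)"
    by (rule LIM_zero_cancel)
  hence "Lim (at_right 0) (\<lambda>\<epsilon>. LINT y:(\<Omega> - ball x \<epsilon>)|lborel. fs u x s y) = I"
    by (intro tendsto_Lim) auto
  thus ?thesis unfolding I_def set_lebesgue_integral_def by simp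
qed




lemma fs_diff:
  fixes u :: "'a::euclidean_space \<Rightarrow> real" and s \<alpha> M D :: real
  assumes op: "open \<Omega>" and cu: "continuous_on \<Omega> u"
    and h: "\<forall>y\<in>\<Omega>. \<bar>u x - u y\<bar> \<le> M * dist x y powr \<alpha>" and M0: "0 \<le> M"
    and s0: "0 < s" and s\<alpha>: "4 * s \<le> \<alpha>" and a1: "\<alpha> < 1" and a0: "0 < \<alpha>"
    and \<Omega>D: "\<Omega> \<subseteq> ball x D" and D1: "1 \<le> D" and \<rho>0: "0 < \<rho>" and \<rho>1: "\<rho> \<le> 1"
  shows "\<bar>(LINT y:\<Omega>|lborel. fs u x s y) - (LINT y:\<Omega>|lborel. fs u x 0 y)\<bar> \<le>
     M * (2 * Kc DIM('a) (DIM('a) - \<alpha>/2) * \<rho> powr (\<alpha>/2)) +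
     M * max (\<rho> powr (-2 * s) - 1) (1 - D powr (-2 * s)) * (Kc DIM('a) (DIM('a) - \<alpha>) * D powr \<alpha>)"
proof -
  define N where "N = DIM('a)"
  have N1: "1 \<le> real DIM('a)" by (rule dim_ge1)
  define \<eta> where "\<eta> = max (\<rho> powr (-2 * s) - 1) (1 - D powr (-2 * s))"
  have \<rho>e: "1 \<le> \<rho> powr (-2 * s)"
    using \<rho>0 \<rho>1 s0 by (simp add: powr_minus_divide) (rule powr_le1, auto)
  have \<eta>0: "0 \<le> \<eta>" unfolding \<eta>_def using \<rho>e by simp
  have "\<Omega> \<in> sets borel" using op by auto
  have D0: "0 < D" using D1 by simp
  have i1: "integrable lborel (\<lambda>y. indicator \<Omega> y * fs u x s y)"
    using fs_local(1)[OF op cu h M0 less_imp_le[OF s0] _ less_imp_le[OF a1] \<open>\<Omega> \<in> sets borel\<close> order_refl \<Omega>D D0] s\<alpha> s0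
    by simp
  have i0: "integrable lborel (\<lambda>y. indicator \<Omega> y * fs u x 0 y)"
    using fs_local(1)[OF op cu h M0 order_refl _ less_imp_le[OF a1] \<open>\<Omega> \<in> sets borel\<close> order_refl \<Omega>D D0] a0
    by simp
  define b1 where "b1 = N - \<alpha>/2"
  define b0 where "b0 = N - \<alpha>"
  have b1: "0 \<le> b1" "b1 < DIM('a)" unfolding b1_def N_def using a0 a1 N1 by linarith+
  have b0: "0 \<le> b0" "b0 < DIM('a)" unfolding b0_def N_def using a0 a1 N1 by linarith+
  note c1 = core[OF b1 \<rho>0, of x] and c0 = core[OF b0 D0, of x]
  define g where "g y = 2 * M * (indicator (ball x \<rho>) y * norm (x - y) powr (- b1)) +
      M * \<eta> * (indicator (ball x D) y * norm (x - y) powr (- b0))" for y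
  have gi1: "integrable lborel (\<lambda>y. 2 * M * (indicator (ball x \<rho>) y * norm (x - y) powr (- b1)))"
    using c1(1) unfolding set_integrable_def by (intro integrable_mult_right) simp
  have gi0: "integrable lborel (\<lambda>y. M * \<eta> * (indicator (ball x D) y * norm (x - y) powr (- b0)))"
    using c0(1) unfolding set_integrable_def by (intro integrable_mult_right) simp
  have gi: "integrable lborel g" unfolding g_def using gi1 gi0 by (rule Bochner_Integration.integrable_add)
  have fm: "(\<lambda>y. indicator \<Omega> y * fs u x s y - indicator \<Omega> y * fs u x 0 y) \<in> borel_measurable lborel"
    using fs_meas[OF op cu, of x s] fs_meas[OF op cu, of x 0] by measurable
  have b: "\<bar>indicator \<Omega> y * fs u x s y - indicator \<Omega> y * fs u x 0 y\<bar> \<le> g y" for y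
  proof -
    have g0: "0 \<le> g y" unfolding g_def using M0 \<eta>0 by simp
    show ?thesis
    proof (cases "y \<in> \<Omega> \<and> y \<noteq> x")
      case True
      hence r0: "0 < norm (x - y)" and rD: "norm (x - y) < D" using \<Omega>D by (auto simp: dist_norm)
      have hd: "\<bar>u x - u y\<bar> \<le> M * norm (x - y) powr \<alpha>" using h True by (simp add: dist_norm)
      note p = pw_diff[OF r0 rD \<rho>0 \<rho>1 D1 less_imp_le[OF s0] s\<alpha> M0 hd, of N]
      have ind: "indicator (ball x \<rho>) y = (if norm (x - y) < \<rho> then 1 else (0::real))"
        by (simp add: indicator_def dist_norm)
      have ind2: "indicator (ball x D) y = (1::real)" using rD by (simp add: indicator_def dist_norm)
      have e1: "fs u x s y = (u x - u y) / norm (x - y) powr (N + 2 * s)" unfolding fs_def N_def by (rule refl)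
      have e0: "fs u x 0 y = (u x - u y) / norm (x - y) powr N" unfolding fs_def N_def by simp
      have iO: "indicator \<Omega> y = (1::real)" using True by simp
      have "\<bar>indicator \<Omega> y * fs u x s y - indicator \<Omega> y * fs u x 0 y\<bar> =
         \<bar>(u x - u y) / norm (x - y) powr (N + 2 * s) - (u x - u y) / norm (x - y) powr N\<bar>"
        by (simp only: e1 e0 iO mult_1_left)
      also have "\<dots> \<le> (if norm (x - y) < \<rho> then 2 * M * norm (x - y) powr (\<alpha> / 2 - N) else 0) +
          M * \<eta> * norm (x - y) powr (\<alpha> - N)"
        using p unfolding \<eta>_def .
      also have "\<dots> = g y"
        unfolding g_def ind ind2 b1_def b0_def by simp

      finally show ?thesis .
    next
      case False
      thus ?thesis using g0 by (auto simp: fs_def)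
    qed
  qed
  note ib = int_bound[OF gi fm b]
  have "(LINT y:\<Omega>|lborel. fs u x s y) - (LINT y:\<Omega>|lborel. fs u x 0 y) =
      integral\<^sup>L lborel (\<lambda>y. indicator \<Omega> y * fs u x s y - indicator \<Omega> y * fs u x 0 y)"
    unfolding set_lebesgue_integral_def using i1 i0 by simp
  hence "\<bar>(LINT y:\<Omega>|lborel. fs u x s y) - (LINT y:\<Omega>|lborel. fs u x 0 y)\<bar> \<le> integral\<^sup>L lborel g"
    using ib(2) by simp
  also have "integral\<^sup>L lborel g = 2 * M * (LINT y:ball x \<rho>|lborel. norm (x - y) powr (-b1)) +
      M * \<eta> * (LINT y:ball x D|lborel. norm (x - y) powr (-b0))"
    unfolding g_def set_lebesgue_integral_def
    by (subst Bochner_Integration.integral_add[OF gi1 gi0]) simp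
  also have "\<dots> \<le> 2 * M * (Kc DIM('a) b1 * \<rho> powr (DIM('a) - b1)) + M * \<eta> * (Kc DIM('a) b0 * D powr (DIM('a) - b0))"
    using c1(2) c0(2) M0 \<eta>0 by (intro add_mono mult_left_mono) auto
  also have "\<dots> = M * (2 * Kc DIM('a) (DIM('a) - \<alpha>/2) * \<rho> powr (\<alpha>/2)) +
     M * \<eta> * (Kc DIM('a) (DIM('a) - \<alpha>) * D powr \<alpha>)"
    unfolding b1_def b0_def N_def by simp
  finally show ?thesis unfolding \<eta>_def .
qed




definition aN :: "nat \<Rightarrow> real \<Rightarrow> real" where
  "aN N s = 4 powr s * Gamma ((real N + 2 * s) / 2) / (pi powr (real N / 2) * Gamma (1 - s))"

lemma c_Ns_aN: "c_Ns N s = s * aN N s"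
  unfolding c_Ns_def aN_def by simp

lemma key_estimate:
  fixes \<Omega> :: "'a::euclidean_space set" and \<alpha> M D \<rho> s :: real
  assumes op: "open \<Omega>" and \<Omega>D: "\<Omega> \<subseteq> ball x D" and D1: "1 \<le> D"
    and a0: "0 < \<alpha>" and a1: "\<alpha> < 1" and M0: "0 \<le> M"
    and u: "u \<in> holder_space \<alpha> \<Omega>" and hn: "holder_norm \<alpha> \<Omega> u \<le> M" and x: "x \<in> \<Omega>"
    and s0: "0 < s" and s\<alpha>: "4 * s \<le> \<alpha>" and \<rho>0: "0 < \<rho>" and \<rho>1: "\<rho> \<le> 1"
  shows "\<bar>regional_frac_lap s \<Omega> u x - s * L_Delta \<Omega> u x\<bar> \<le>
    s * (\<bar>aN DIM('a) s - c_N DIM('a)\<bar> * (M * (Kc DIM('a) (DIM('a) - \<alpha>) * D powr \<alpha>) +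
       (M * (2 * Kc DIM('a) (DIM('a) - \<alpha>/2) * \<rho> powr (\<alpha>/2)) +
        M * max (\<rho> powr (-2 * s) - 1) (1 - D powr (-2 * s)) * (Kc DIM('a) (DIM('a) - \<alpha>) * D powr \<alpha>)))
     + c_N DIM('a) * (M * (2 * Kc DIM('a) (DIM('a) - \<alpha>/2) * \<rho> powr (\<alpha>/2)) +
        M * max (\<rho> powr (-2 * s) - 1) (1 - D powr (-2 * s)) * (Kc DIM('a) (DIM('a) - \<alpha>) * D powr \<alpha>)))"
    (is "_ \<le> s * (\<bar>?a - ?c\<bar> * (?B + ?\<Delta>) + ?c * ?\<Delta>)")
proof -
  have hb: "\<forall>y\<in>\<Omega>. \<bar>u x - u y\<bar> \<le> M * dist x y powr \<alpha>"
    using holder_bound[OF u hn _ _ a0] x closure_subset by blast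
  have "\<forall>y\<in>\<Omega>. \<forall>z\<in>\<Omega>. \<bar>u y - u z\<bar> \<le> M * dist y z powr \<alpha>"
    using holder_bound[OF u hn _ _ a0] closure_subset by blast
  hence cu: "continuous_on \<Omega> u" using a0 by (rule holder_cont)
  have D0: "0 < D" using D1 by simp
  define Is where "Is = (LINT y:\<Omega>|lborel. fs u x s y)"
  define I0 where "I0 = (LINT y:\<Omega>|lborel. fs u x 0 y)"
  have reg: "regional_frac_lap s \<Omega> u x = c_Ns DIM('a) s * Is"
  proof -
    have "regional_frac_lap s \<Omega> u x = c_Ns DIM('a) s * Lim (at_right 0) (\<lambda>\<epsilon>. LINT y:(\<Omega> - ball x \<epsilon>)|lborel. fs u x s y)"
      unfolding regional_frac_lap_def fs_def by simp
    also have "Lim (at_right 0) (\<lambda>\<epsilon>. LINT y:(\<Omega> - ball x \<epsilon>)|lborel. fs u x s y) = Is"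
      unfolding Is_def using s0 s\<alpha> a0 a1 by (intro fs_lim[OF op cu hb M0 _ _ _ \<Omega>D D0]) auto
    finally show ?thesis .
  qed
  have lap: "L_Delta \<Omega> u x = c_N DIM('a) * I0"
    unfolding L_Delta_def I0_def fs_def by simp
  have \<Delta>: "\<bar>Is - I0\<bar> \<le> ?\<Delta>"
    unfolding Is_def I0_def using fs_diff[OF op cu hb M0 s0 s\<alpha> a1 a0 \<Omega>D D1 \<rho>0 \<rho>1] .
  have "\<Omega> \<in> sets borel" using op by auto
  have "\<bar>integral\<^sup>L lborel (\<lambda>y. indicator \<Omega> y * fs u x 0 y)\<bar> \<le> M * (Kc DIM('a) (real DIM('a) + 2 * (0::real) - \<alpha>) * D powr (\<alpha> - 2 * (0::real)))"
    using a0 a1 by (intro fs_local(2)[OF op cu hb M0 _ _ _ \<open>\<Omega> \<in> sets borel\<close> order_refl \<Omega>D D0]) auto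
  hence B: "\<bar>I0\<bar> \<le> ?B" unfolding I0_def set_lebesgue_integral_def by simp
  have c0: "0 \<le> ?c" unfolding c_N_def by simp
  have "regional_frac_lap s \<Omega> u x - s * L_Delta \<Omega> u x = s * ((?a - ?c) * Is + ?c * (Is - I0))"
    unfolding reg lap c_Ns_aN by (simp add: algebra_simps)
  also have "\<bar>\<dots>\<bar> = s * \<bar>(?a - ?c) * Is + ?c * (Is - I0)\<bar>" using s0 by (simp add: abs_mult)
  also have "\<dots> \<le> s * (\<bar>?a - ?c\<bar> * (?B + ?\<Delta>) + ?c * ?\<Delta>)"
  proof (intro mult_left_mono)
    have "\<bar>(?a - ?c) * Is + ?c * (Is - I0)\<bar> \<le> \<bar>?a - ?c\<bar> * \<bar>Is\<bar> + ?c * \<bar>Is - I0\<bar>"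
      using c0 by (simp add: abs_mult abs_triangle_ineq order_trans[OF abs_triangle_ineq])
    also have "\<dots> \<le> \<bar>?a - ?c\<bar> * (?B + ?\<Delta>) + ?c * ?\<Delta>"
    proof (intro add_mono mult_left_mono)
      show "\<bar>Is\<bar> \<le> ?B + ?\<Delta>" using B \<Delta> by linarith
    qed (use \<Delta> c0 in auto)
    finally show "\<bar>(?a - ?c) * Is + ?c * (Is - I0)\<bar> \<le> \<bar>?a - ?c\<bar> * (?B + ?\<Delta>) + ?c * ?\<Delta>" .
  qed (use s0 in auto)
  finally show ?thesis .
qed




lemma aN_tendsto: "((\<lambda>s. aN N s) \<longlongrightarrow> c_N N) (at_right 0)" if N1: "1 \<le> N"
proof -
  have nz1: "(real N + 2 * 0) / 2 \<notin> \<int>\<^sub>\<le>\<^sub>0" using N1 by (auto dest!: nonpos_Ints_nonpos)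
  have nz2: "(1 - 0::real) \<notin> \<int>\<^sub>\<le>\<^sub>0" by (auto dest!: nonpos_Ints_nonpos)
  have g1: "Gamma (1 - 0::real) \<noteq> 0" by simp
  have "isCont (\<lambda>s. aN N s) 0" unfolding aN_def
    using nz1 nz2 g1 by (intro continuous_intros) auto
  hence "((\<lambda>s. aN N s) \<longlongrightarrow> aN N 0) (at 0)" by (simp add: isCont_def)
  hence "((\<lambda>s. aN N s) \<longlongrightarrow> aN N 0) (at_right 0)" by (rule tendsto_within_subset) auto
  moreover have "aN N 0 = c_N N" unfolding aN_def c_N_def by simp
  ultimately show ?thesis by simp
qed

lemma eta_tendsto:
  fixes \<rho> D :: real assumes "0 < \<rho>" "0 < D"
  shows "((\<lambda>s. max (\<rho> powr (-2 * s) - 1) (1 - D powr (-2 * s))) \<longlongrightarrow> 0) (at_right 0)"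
proof -
  have "((\<lambda>s. max (\<rho> powr (-2 * s) - 1) (1 - D powr (-2 * s))) \<longlongrightarrow>
      max (\<rho> powr (-2 * 0) - 1) (1 - D powr (-2 * 0))) (at_right 0)"
    using assms by (intro tendsto_intros) auto
  thus ?thesis using assms by simp
qed

lemma aux_rho: fixes p d :: real assumes "0 \<le> p" "0 < d" shows "2 * p * (d / (4 * p + 1)) \<le> d / 2"
proof -
  have q: "0 < 4 * p + 1" using assms by simp
  have "2 * p * (d / (4 * p + 1)) = (2 * p * d) / (4 * p + 1)" by simp
  also have "\<dots> \<le> d / 2" using q assms by (simp add: pos_divide_le_eq field_simps)
  finally show ?thesis .
qed

theorem corollary1p2:
  fixes \<Omega> :: "'a::euclidean_space set" and \<alpha> M :: real
  assumes "lipschitz_set \<Omega>" and "0 < \<alpha>" and "\<alpha> < 1"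
  shows "\<forall>\<epsilon>>0. \<exists>\<delta>>0. \<forall>s. 0 < s \<and> s < \<delta> \<longrightarrow>
           (\<forall>u\<in>holder_space \<alpha> \<Omega>. holder_norm \<alpha> \<Omega> u \<le> M \<longrightarrow>
              (\<forall>x\<in>\<Omega>. \<bar>regional_frac_lap s \<Omega> u x - s * L_Delta \<Omega> u x\<bar> \<le> \<epsilon> * s))"
proof (intro allI impI)
  fix \<epsilon> :: real assume e0: "0 < \<epsilon>"
  have a0: "0 < \<alpha>" and a1: "\<alpha> < 1" using assms by auto
  have bd: "bounded \<Omega>" and op: "open \<Omega>" using assms(1) unfolding lipschitz_set_def by auto
  obtain R0 where R0: "\<forall>y\<in>\<Omega>. norm y \<le> R0" using bd unfolding bounded_iff by auto
  define D where "D = 2 * max R0 0 + 1"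
  have D1: "1 \<le> D" unfolding D_def by simp
  have \<Omega>D: "\<Omega> \<subseteq> ball x D" if "x \<in> \<Omega>" for x
  proof
    fix y assume "y \<in> \<Omega>"
    hence "norm x \<le> max R0 0" "norm y \<le> max R0 0" using R0 that by force+
    moreover have "dist x y \<le> norm x + norm y" by (simp add: dist_norm norm_triangle_ineq4)
    ultimately show "y \<in> ball x D" unfolding D_def by simp
  qed
  define M' where "M' = \<bar>M\<bar>"
  have M0: "0 \<le> M'" unfolding M'_def by simp
  define cN where "cN = c_N DIM('a)"
  have c0: "0 \<le> cN" unfolding cN_def c_N_def by simp
  define K0 where "K0 = Kc DIM('a) (DIM('a) - \<alpha>)"
  define K1 where "K1 = Kc DIM('a) (DIM('a) - \<alpha>/2)"
  have K0: "0 < K0" unfolding K0_def using a0 by (intro Kc_pos) auto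
  have K1: "0 < K1" unfolding K1_def using a0 by (intro Kc_pos) auto
  define B where "B = M' * (K0 * D powr \<alpha>)"
  have B0: "0 \<le> B" unfolding B_def using M0 K0 by simp
  define \<delta>1 where "\<delta>1 = min 1 (\<epsilon> / (2 * (cN + 1)))"
  have d10: "0 < \<delta>1" unfolding \<delta>1_def using e0 c0 by simp
  have d11: "\<delta>1 \<le> 1" unfolding \<delta>1_def by simp
  have d12: "cN * \<delta>1 \<le> \<epsilon> / 2"
  proof -
    have "cN * \<delta>1 \<le> cN * (\<epsilon> / (2 * (cN + 1)))" unfolding \<delta>1_def using c0 by (intro mult_left_mono) auto
    also have "\<dots> \<le> \<epsilon> / 2" using c0 e0 by (simp add: field_simps)
    finally show ?thesis .
  qed
  define t where "t = \<delta>1 / (4 * M' * K1 + 1)"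
  have m1: "0 \<le> M' * K1" using M0 K1 by simp
  have m2: "4 * M' * K1 = 4 * (M' * K1)" by (simp only: mult.assoc)
  have pos: "0 < 4 * M' * K1 + 1" using m1 m2 by linarith
  have t0: "0 < t" unfolding t_def using d10 pos by (rule divide_pos_pos)
  define \<rho> where "\<rho> = min 1 (t powr (2/\<alpha>))"
  have \<rho>0: "0 < \<rho>" and \<rho>1: "\<rho> \<le> 1" unfolding \<rho>_def using t0 by auto
  have h\<rho>: "M' * (2 * K1 * \<rho> powr (\<alpha>/2)) \<le> \<delta>1 / 2"
  proof -
    have "\<rho> powr (\<alpha>/2) \<le> (t powr (2/\<alpha>)) powr (\<alpha>/2)"
      unfolding \<rho>_def using a0 t0 by (intro powr_mono2) auto
    also have "\<dots> = t" using a0 t0 by (simp add: powr_powr)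
    finally have "\<rho> powr (\<alpha>/2) \<le> t" .
    hence "M' * (2 * K1 * \<rho> powr (\<alpha>/2)) \<le> M' * (2 * K1 * t)"
      using M0 K1 by (intro mult_left_mono) auto
    also have "\<dots> = 2 * (M' * K1) * (\<delta>1 / (4 * (M' * K1) + 1))" unfolding t_def m2 by (simp only: mult_ac)
    also have "\<dots> \<le> \<delta>1 / 2" using m1 d10 by (rule aux_rho)
    finally show ?thesis .
  qed
  define \<eta> where "\<eta> s = max (\<rho> powr (-2 * s) - 1) (1 - D powr (-2 * s))" for s :: real
  have ev1: "\<forall>\<^sub>F s in at_right 0. s < \<alpha> / 4"
    using order_tendstoD(2)[OF tendsto_ident_at[of "0::real" "{0<..}"], of "\<alpha>/4"] a0 by simp
  have ev2: "\<forall>\<^sub>F s in at_right 0. \<eta> s < \<delta>1 / (2 * (B + 1))"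
    using order_tendstoD(2)[OF eta_tendsto[OF \<rho>0, of D], of "\<delta>1 / (2 * (B + 1))"] d10 B0 D1
    unfolding \<eta>_def by simp
  have N1: "1 \<le> DIM('a)" using DIM_positive[where 'a='a] by linarith
  have ev3: "\<forall>\<^sub>F s in at_right 0. dist (aN DIM('a) s) cN < \<epsilon> / (2 * (B + 1))"
    using tendstoD[OF aN_tendsto[OF N1], of "\<epsilon> / (2 * (B + 1))"] e0 B0 unfolding cN_def by simp
  obtain b where b0: "0 < b" and bP: "\<forall>s>0. s < b \<longrightarrow> s < \<alpha> / 4 \<and> \<eta> s < \<delta>1 / (2 * (B + 1)) \<and>
      dist (aN DIM('a) s) cN < \<epsilon> / (2 * (B + 1))"
    using eventually_conj[OF ev1 eventually_conj[OF ev2 ev3]] unfolding eventually_at_right_field by auto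
  show "\<exists>\<delta>>0. \<forall>s. 0 < s \<and> s < \<delta> \<longrightarrow>
           (\<forall>u\<in>holder_space \<alpha> \<Omega>. holder_norm \<alpha> \<Omega> u \<le> M \<longrightarrow>
              (\<forall>x\<in>\<Omega>. \<bar>regional_frac_lap s \<Omega> u x - s * L_Delta \<Omega> u x\<bar> \<le> \<epsilon> * s))"
  proof (intro exI[of _ b] conjI allI impI ballI b0)
    fix s u x assume s: "0 < s \<and> s < b" and u: "u \<in> holder_space \<alpha> \<Omega>"
      and hn: "holder_norm \<alpha> \<Omega> u \<le> M" and x: "x \<in> \<Omega>"
    have s0: "0 < s" using s by simp
    have P: "s < \<alpha> / 4" "\<eta> s < \<delta>1 / (2 * (B + 1))" "\<bar>aN DIM('a) s - cN\<bar> < \<epsilon> / (2 * (B + 1))"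
      using bP s by (auto simp: dist_real_def)
    have hn': "holder_norm \<alpha> \<Omega> u \<le> M'" using hn unfolding M'_def by simp
    note k = key_estimate[OF op \<Omega>D[OF x] D1 a0 a1 M0 u hn' x s0 _ \<rho>0 \<rho>1]
    define \<Delta> where "\<Delta> = M' * (2 * K1 * \<rho> powr (\<alpha>/2)) + \<eta> s * B"
    have k': "\<bar>regional_frac_lap s \<Omega> u x - s * L_Delta \<Omega> u x\<bar> \<le>
        s * (\<bar>aN DIM('a) s - cN\<bar> * (B + \<Delta>) + cN * \<Delta>)"
      using k P(1) unfolding \<Delta>_def B_def K0_def K1_def cN_def \<eta>_def by (simp add: mult_ac)
    have "\<eta> s * B \<le> \<delta>1 / (2 * (B + 1)) * B" using P(2) B0 by (intro mult_right_mono) auto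
    also have "\<dots> \<le> \<delta>1 / 2" using B0 d10 by (simp add: field_simps)
    finally have "\<eta> s * B \<le> \<delta>1 / 2" .
    hence D\<delta>: "\<Delta> \<le> \<delta>1" unfolding \<Delta>_def using h\<rho> by linarith
    have "\<bar>aN DIM('a) s - cN\<bar> * (B + \<Delta>) \<le> \<epsilon> / (2 * (B + 1)) * (B + 1)"
    proof (cases "0 \<le> B + \<Delta>")
      case True
      thus ?thesis using P(3) D\<delta> d11 B0 by (intro mult_mono) auto
    next
      case False
      hence "\<bar>aN DIM('a) s - cN\<bar> * (B + \<Delta>) \<le> 0" by (simp add: mult_nonneg_nonpos)
      also have "0 \<le> \<epsilon> / (2 * (B + 1)) * (B + 1)" using e0 B0 by simp
      finally show ?thesis .
    qed
    also have "\<dots> = \<epsilon> / 2" using B0 by (simp add: field_simps)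
    finally have t1: "\<bar>aN DIM('a) s - cN\<bar> * (B + \<Delta>) \<le> \<epsilon> / 2" .
    have t2: "cN * \<Delta> \<le> \<epsilon> / 2" using d12 D\<delta> c0 by (meson mult_left_mono order_trans)
    have "s * (\<bar>aN DIM('a) s - cN\<bar> * (B + \<Delta>) + cN * \<Delta>) \<le> s * \<epsilon>"
      using t1 t2 s0 by (intro mult_left_mono) auto
    thus "\<bar>regional_frac_lap s \<Omega> u x - s * L_Delta \<Omega> u x\<bar> \<le> \<epsilon> * s"
      using k' by (simp add: mult.commute)
  qed
qed


end
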